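(* Let $k\in\{2,3\}$, let $C$ and $C'$ be configurations of g-$k$PATH, let $v\in C$, and let $t\ge0$ be an integer with $\mathrm{d}_C(\mathbf{0},v)\le t$. Then $C\equiv'_{t,v}C'$ if and only if $C'$ is a consistent extension of the subset $M(v,t,C)$ of $C$.
   Context: Positions are elements of $\mathbb{Z}^k$; $\mathbf 0$ is the origin. Let $\epsilon_0,\dots,\epsilon_{2k-1}$ be the $2k$ vectors $\pm e_1,\dots,\pm e_k$ (unit coordinate vectors and their negatives) in a fixed order; positions $p,p'$ are adjacent if $p'-p$ is one of them. A configuration of g-$k$PATH is a sequence $p_r p_{r+1}\dots p_s$ ($r\le0\le s$) of positions with $p_0=\mathbf 0$, $p_l$ and $p_{l+1}$ adjacent for all $r\le l<s$, all $p_l$ distinct, and $p_l,p_m$ not adjacent whenever $|l-m|\ge2$; it is identified with its set of positions. For a configuration $C$ and $p,p'\in C$, $\mathrm{d}_C(p,p')$ is the number of steps of a shortest path from $p$ to $p'$ inside $C$ (consecutive positions adjacent). For $p\in C$, $\mathrm{bc}_C(p)=(b_0,\dots,b_{2k-1})\in\{0,1\}^{2k}$ with $b_i=1$ iff $p+\epsilon_i\in C$. $\mathrm{ai}(v,t,C)$ is the symbol $\mathrm{Q}$ if $\mathrm{d}_C(\mathbf 0,v)>t$, and otherwise the triple $(t,v,\{(v',\mathrm{bc}_C(v')) : v'\in C,\ \mathrm{d}_C(\mathbf 0,v')+\mathrm{d}_C(v',v)\le t\})$. $C\equiv'_{t,v}C'$ means $v\in C\cap C'$ and $\mathrm{ai}(v,t,C)=\mathrm{ai}(v,t,C')\neq\mathrm{Q}$.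 $M(v,t,C)=\{v'\in C:\mathrm{d}_C(\mathbf 0,v')+\mathrm{d}_C(v',v)\le t\}$. $C'$ is a consistent extension of a subset $M$ of $C$ if $M\subseteq C'$ and $\mathrm{bc}_C(w)=\mathrm{bc}_{C'}(w)$ for all $w\in M$. *)

theory Defs
  imports Main
begin

text \<open>Positions of g-kPATH: elements of Z^k, represented as integer lists of length k.\<close>

definition pos :: "nat \<Rightarrow> int list \<Rightarrow> bool" where
  "pos k p \<longleftrightarrow> length p = k"

definition origin :: "nat \<Rightarrow> int list" where
  "origin k = replicate k 0"

text \<open>Fixed order of the 2k unit vectors: eps 0..eps (k-1) = e_1..e_k,
  eps k..eps (2k-1) = -e_1..-e_k.\<close>
definition eps :: "nat \<Rightarrow> nat \<Rightarrow> int list" where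
  "eps k i = (if i < k then map (\<lambda>j. if j = i then 1 else 0) [0..<k]
              else map (\<lambda>j. if j = i - k then -1 else 0) [0..<k])"

definition vadd :: "int list \<Rightarrow> int list \<Rightarrow> int list" where
  "vadd p q = map2 (+) p q"

definition adj :: "nat \<Rightarrow> int list \<Rightarrow> int list \<Rightarrow> bool" where
  "adj k p p' \<longleftrightarrow> pos k p \<and> pos k p' \<and> (\<exists>i<2*k. p' = vadd p (eps k i))"

text \<open>A configuration: the set of positions of a sequence p_r..p_s (r <= 0 <= s)
  with p_0 the origin, consecutive positions adjacent, all distinct, and
  non-consecutive positions non-adjacent.  The list ps is p_r..p_s; the origin
  occurs somewhere in it.\<close>
definition gconfig :: "nat \<Rightarrow> int list set \<Rightarrow> bool" where
  "gconfig k C \<longleftrightarrow> (\<exists>ps. ps \<noteq> [] \<and> origin k \<in> set ps \<and> (\<forall>p\<in>set ps. pos k p) \<and>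
     distinct ps \<and>
     (\<forall>l. Suc l < length ps \<longrightarrow> adj k (ps ! l) (ps ! Suc l)) \<and>
     (\<forall>l m. l < length ps \<and> m < length ps \<and> l + 2 \<le> m \<longrightarrow> \<not> adj k (ps ! l) (ps ! m)) \<and>
     C = set ps)"

definition walk_in :: "nat \<Rightarrow> int list set \<Rightarrow> int list \<Rightarrow> int list \<Rightarrow> nat \<Rightarrow> bool" where
  "walk_in k C p p' n \<longleftrightarrow> (\<exists>xs. length xs = Suc n \<and> hd xs = p \<and> last xs = p' \<and> set xs \<subseteq> C \<and>
      (\<forall>i<n. adj k (xs ! i) (xs ! Suc i)))"

definition dC :: "nat \<Rightarrow> int list set \<Rightarrow> int list \<Rightarrow> int list \<Rightarrow> nat" where
  "dC k C p p' = (LEAST n. walk_in k C p p' n)"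

definition bc :: "nat \<Rightarrow> int list set \<Rightarrow> int list \<Rightarrow> bool list" where
  "bc k C p = map (\<lambda>i. vadd p (eps k i) \<in> C) [0..<2*k]"

datatype ai_val = Q | AI nat "int list" "(int list \<times> bool list) set"

definition ai :: "nat \<Rightarrow> int list \<Rightarrow> nat \<Rightarrow> int list set \<Rightarrow> ai_val" where
  "ai k v t C = (if dC k C (origin k) v > t then Q
     else AI t v {(v', bc k C v') | v'. v' \<in> C \<and> dC k C (origin k) v' + dC k C v' v \<le> t})"

definition equiv' :: "nat \<Rightarrow> nat \<Rightarrow> int list \<Rightarrow> int list set \<Rightarrow> int list set \<Rightarrow> bool" where
  "equiv' k t v C C' \<longleftrightarrow> v \<in> C \<and> v \<in> C' \<and> ai k v t C = ai k v t C' \<and> ai k v t C \<noteq> Q"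

definition Mset :: "nat \<Rightarrow> int list \<Rightarrow> nat \<Rightarrow> int list set \<Rightarrow> int list set" where
  "Mset k v t C = {v' \<in> C. dC k C (origin k) v' + dC k C v' v \<le> t}"

definition consistent_ext :: "nat \<Rightarrow> int list set \<Rightarrow> int list set \<Rightarrow> int list set \<Rightarrow> bool" where
  "consistent_ext k M C C' \<longleftrightarrow> M \<subseteq> C' \<and> (\<forall>w\<in>M. bc k C w = bc k C' w)"

end

theory Submission
  imports Defs
begin

lemma eps_nth: "j < k \<Longrightarrow> eps k i ! j = (if i < k then (if j = i then 1 else 0) else (if j = i - k then -1 else 0))"
  by (simp add: eps_def)

lemma eps_len[simp]: "length (eps k i) = k"
  by (simp add: eps_def)

lemma vadd_len[simp]: "length (vadd p q) = min (length p) (length q)"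
  by (simp add: vadd_def)

lemma vadd_nth: "j < length p \<Longrightarrow> j < length q \<Longrightarrow> vadd p q ! j = p ! j + q ! j"
  by (simp add: vadd_def)

lemma adj_sym: assumes "adj k p q" shows "adj k q p"
proof -
  from assms obtain i where i: "i < 2*k" "q = vadd p (eps k i)" and pp: "pos k p" "pos k q"
    unfolding adj_def by blast
  define i' where "i' = (if i < k then i + k else i - k)"
  have ik: "\<not> i < k \<Longrightarrow> i - k < k" using i(1) by linarith
  have "i' < 2*k" unfolding i'_def using i(1) by auto
  moreover have "p = vadd q (eps k i')"
  proof (rule nth_equalityI)
    show "length p = length (vadd q (eps k i'))" using pp by (simp add: pos_def)
    fix j assume "j < length p"
    hence j: "j < k" using pp by (simp add: pos_def)
    show "p ! j = vadd q (eps k i') ! j"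
      using j pp i ik by (simp add: vadd_nth eps_nth pos_def i'_def)
  qed
  ultimately show ?thesis using pp unfolding adj_def by blast
qed

lemma adj_irrefl: assumes "k > 0" shows "\<not> adj k p p"
proof
  assume "adj k p p"
  then obtain i where i: "i < 2*k" "p = vadd p (eps k i)" and pp: "pos k p"
    unfolding adj_def by blast
  define j where "j = (if i < k then i else i - k)"
  have j: "j < k" unfolding j_def using i(1) by auto
  have "p ! j = vadd p (eps k i) ! j" using i by simp
  also have "\<dots> = p ! j + eps k i ! j" using j pp by (simp add: vadd_nth pos_def)
  finally show False using j by (simp add: eps_nth j_def split: if_splits)
qed

definition plist :: "nat \<Rightarrow> int list list \<Rightarrow> bool" where
  "plist k ps \<longleftrightarrow> ps \<noteq> [] \<and> (\<forall>p\<in>set ps. pos k p) \<and> distinct ps \<and>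
     (\<forall>l. Suc l < length ps \<longrightarrow> adj k (ps ! l) (ps ! Suc l)) \<and>
     (\<forall>l m. l < length ps \<and> m < length ps \<and> l + 2 \<le> m \<longrightarrow> \<not> adj k (ps ! l) (ps ! m))"

lemma gconfig_plist: "gconfig k C \<Longrightarrow> \<exists>ps. plist k ps \<and> origin k \<in> set ps \<and> C = set ps"
  unfolding gconfig_def plist_def by blast

lemma adj_idx:
  assumes "plist k ps" "k > 0" "l < length ps" "m < length ps"
  shows "adj k (ps ! l) (ps ! m) \<longleftrightarrow> (m = Suc l \<or> l = Suc m)"
proof
  assume a: "adj k (ps ! l) (ps ! m)"
  have "l \<noteq> m" using a adj_irrefl[OF assms(2)] by blast
  moreover have "\<not> l + 2 \<le> m" using a assms unfolding plist_def by blast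
  moreover have "\<not> m + 2 \<le> l" using adj_sym[OF a] assms unfolding plist_def by blast
  ultimately show "m = Suc l \<or> l = Suc m" by linarith
next
  assume "m = Suc l \<or> l = Suc m"
  thus "adj k (ps ! l) (ps ! m)" using assms adj_sym unfolding plist_def by blast
qed

lemma plist_rev: assumes "plist k ps" shows "plist k (rev ps)"
proof -
  have "\<forall>l. Suc l < length (rev ps) \<longrightarrow> adj k (rev ps ! l) (rev ps ! Suc l)"
  proof (intro allI impI)
    fix l assume "Suc l < length (rev ps)"
    show "adj k (rev ps ! l) (rev ps ! Suc l)"
    proof -
      have a: "Suc (length ps - Suc (Suc l)) < length ps" "Suc (length ps - Suc (Suc l)) = length ps - Suc l"
        using \<open>Suc l < length (rev ps)\<close> by auto
      have "adj k (ps ! (length ps - Suc (Suc l))) (ps ! Suc (length ps - Suc (Suc l)))"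
        using assms a(1) unfolding plist_def by blast
      thus ?thesis using a \<open>Suc l < length (rev ps)\<close> by (simp add: rev_nth adj_sym)
    qed
  qed
  moreover have "\<forall>l m. l < length (rev ps) \<and> m < length (rev ps) \<and> l + 2 \<le> m \<longrightarrow> \<not> adj k (rev ps ! l) (rev ps ! m)"
  proof (intro allI impI)
    fix l m assume lm: "l < length (rev ps) \<and> m < length (rev ps) \<and> l + 2 \<le> m"
    show "\<not> adj k (rev ps ! l) (rev ps ! m)"
    proof
      assume "adj k (rev ps ! l) (rev ps ! m)"
      hence "adj k (ps ! (length ps - Suc m)) (ps ! (length ps - Suc l))"
        using lm by (simp add: rev_nth adj_sym)
      moreover have "length ps - Suc m < length ps" "length ps - Suc l < length ps"
          "length ps - Suc m + 2 \<le> length ps - Suc l" using lm by auto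
      ultimately show False using assms unfolding plist_def by blast
    qed
  qed
  ultimately show ?thesis using assms unfolding plist_def by simp
qed

definition nd :: "nat \<Rightarrow> nat \<Rightarrow> nat" where
  "nd i j = (if i \<le> j then j - i else i - j)"

lemma walk_lower:
  assumes "plist k ps" "k > 0" "i < length ps" "j < length ps"
    and "walk_in k (set ps) (ps ! i) (ps ! j) n"
  shows "nd i j \<le> n"
proof -
  from assms(5) obtain xs where xs: "length xs = Suc n" "hd xs = ps ! i" "last xs = ps ! j"
    "set xs \<subseteq> set ps" "\<forall>r<n. adj k (xs ! r) (xs ! Suc r)"
    unfolding walk_in_def by blast
  have dis: "distinct ps" using assms(1) unfolding plist_def by blast
  have claim: "r \<le> n \<Longrightarrow> \<exists>m<length ps. xs ! r = ps ! m \<and> nd m i \<le> r" for r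
  proof (induction r)
    case 0
    have "xs ! 0 = ps ! i" using xs(1,2) by (cases xs) auto
    thus ?case using assms(3) by (auto simp: nd_def)
  next
    case (Suc r)
    then obtain m where m: "m < length ps" "xs ! r = ps ! m" "nd m i \<le> r" by auto
    have "xs ! Suc r \<in> set ps" using xs(1,4) Suc.prems by (metis le_imp_less_Suc nth_mem subsetD)
    then obtain m' where m': "m' < length ps" "xs ! Suc r = ps ! m'" by (metis in_set_conv_nth)
    have "r < n" using Suc.prems by simp
    hence "adj k (ps ! m) (ps ! m')" using xs(5) m(2) m'(2) by metis
    hence "m' = Suc m \<or> m = Suc m'" using adj_idx[OF assms(1,2) m(1) m'(1)] by blast
    hence "nd m' i \<le> Suc r" using m(3) unfolding nd_def by (auto split: if_splits)
    thus ?case using m' by blast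
  qed
  obtain m where m: "m < length ps" "xs ! n = ps ! m" "nd m i \<le> n" using claim by blast
  have "xs ! n = ps ! j" using xs(1,3) last_conv_nth[of xs] by (cases xs) auto
  hence "m = j" using m dis assms(4) nth_eq_iff_index_eq by metis
  thus ?thesis using m(3) unfolding nd_def by (auto split: if_splits)
qed

lemma walk_upper:
  assumes "plist k ps" "k > 0" "i < length ps" "j < length ps"
  shows "walk_in k (set ps) (ps ! i) (ps ! j) (nd i j)"
proof -
  define f where "f r = (if i \<le> j then i + r else i - r)" for r
  define xs where "xs = map (\<lambda>r. ps ! f r) [0..<Suc (nd i j)]"
  have fl: "r \<le> nd i j \<Longrightarrow> f r < length ps" for r using assms(3,4) by (auto simp: f_def nd_def)
  have "length xs = Suc (nd i j)" by (simp add: xs_def)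
  moreover have "hd xs = ps ! i" by (simp add: xs_def f_def upt_conv_Cons del: upt_Suc)
  moreover have "last xs = ps ! j" by (simp add: xs_def last_map f_def nd_def)
  moreover have "set xs \<subseteq> set ps" using fl by (auto simp: xs_def)
  moreover have "\<forall>r<nd i j. adj k (xs ! r) (xs ! Suc r)"
  proof (intro allI impI)
    fix r assume r: "r < nd i j"
    have "xs ! r = ps ! f r" "xs ! Suc r = ps ! f (Suc r)" using r
      by (simp_all add: xs_def nth_map del: upt_Suc)
    moreover have "f (Suc r) = Suc (f r) \<or> f r = Suc (f (Suc r))" using r by (auto simp: f_def nd_def)
    ultimately show "adj k (xs ! r) (xs ! Suc r)"
      using adj_idx[OF assms(1,2) fl fl] r by auto
  qed
  ultimately show ?thesis unfolding walk_in_def by blast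
qed

lemma dist_idx:
  assumes "plist k ps" "k > 0" "i < length ps" "j < length ps"
  shows "dC k (set ps) (ps ! i) (ps ! j) = nd i j"
  unfolding dC_def
  by (rule Least_equality) (use walk_upper[OF assms] walk_lower[OF assms] in auto)

lemma propagate:
  assumes ps: "plist k ps" and qs: "plist k qs" and k: "k > 0"
    and aL: "a + L < length ps" and sub: "\<forall>r\<le>L. ps ! (a + r) \<in> set qs"
    and L: "0 < L" and c1: "c + 1 < length qs" and b0: "qs ! c = ps ! a" and b1: "qs ! (c + 1) = ps ! (a + 1)"
  shows "\<forall>r\<le>L. c + r < length qs \<and> qs ! (c + r) = ps ! (a + r)"
proof -
  have dps: "distinct ps" using ps unfolding plist_def by blast
  have claim: "Suc r \<le> L \<longrightarrow> c + Suc r < length qs \<and> qs ! (c + r) = ps ! (a + r) \<and> qs ! (c + Suc r) = ps ! (a + Suc r)" for r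
  proof (induction r)
    case 0
    then show ?case using c1 b0 b1 by simp
  next
    case (Suc r)
    show ?case
    proof
      assume sr: "Suc (Suc r) \<le> L"
      with Suc.IH have ih: "c + Suc r < length qs" "qs ! (c + r) = ps ! (a + r)" "qs ! (c + Suc r) = ps ! (a + Suc r)"
        by auto
      have "ps ! (a + Suc (Suc r)) \<in> set qs" using sub sr by blast
      then obtain m where m: "m < length qs" "qs ! m = ps ! (a + Suc (Suc r))" by (metis in_set_conv_nth)
      have "adj k (ps ! (a + Suc r)) (ps ! (a + Suc (Suc r)))"
        using adj_idx[OF ps k, of "a + Suc r" "a + Suc (Suc r)"] aL sr by simp
      hence "adj k (qs ! (c + Suc r)) (qs ! m)" using ih m by simp
      hence mm: "m = Suc (c + Suc r) \<or> c + Suc r = Suc m" using adj_idx[OF qs k ih(1) m(1)] by blast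
      have "m \<noteq> c + r"
      proof
        assume "m = c + r"
        hence "ps ! (a + r) = ps ! (a + Suc (Suc r))" using ih m by simp
        thus False using dps aL sr nth_eq_iff_index_eq[OF dps, of "a + r" "a + Suc (Suc r)"] by simp
      qed
      hence "m = c + Suc (Suc r)" using mm by simp
      thus "c + Suc (Suc r) < length qs \<and> qs ! (c + Suc r) = ps ! (a + Suc r) \<and> qs ! (c + Suc (Suc r)) = ps ! (a + Suc (Suc r))"
        using m ih by simp
    qed
  qed
  show ?thesis
  proof (intro allI impI)
    fix r assume r: "r \<le> L"
    show "c + r < length qs \<and> qs ! (c + r) = ps ! (a + r)"
    proof (cases r)
      case 0 thus ?thesis using c1 b0 by simp
    next
      case (Suc r') thus ?thesis using claim[of r'] r by simp
    qed
  qed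
qed

lemma orient:
  assumes ps: "plist k ps" and qs: "plist k qs" and k: "k > 0"
    and aL: "a + L < length ps" and sub: "\<forall>r\<le>L. ps ! (a + r) \<in> set qs"
  shows "\<exists>qs2 c. plist k qs2 \<and> set qs2 = set qs \<and> (\<forall>r\<le>L. c + r < length qs2 \<and> qs2 ! (c + r) = ps ! (a + r))"
proof -
  have "ps ! a \<in> set qs" using sub by (metis add_0_right le0)
  then obtain c0 where c0: "c0 < length qs" "qs ! c0 = ps ! a" by (metis in_set_conv_nth)
  show ?thesis
  proof (cases "L = 0")
    case True
    thus ?thesis using c0 qs by (intro exI[of _ qs] exI[of _ c0]) auto
  next
    case False
    hence L: "0 < L" by simp
    have "1 \<le> L" using L by simp
    hence "ps ! (a + 1) \<in> set qs" using sub by blast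
    then obtain c1 where c1: "c1 < length qs" "qs ! c1 = ps ! (a + 1)" by (metis in_set_conv_nth)
    have "adj k (ps ! a) (ps ! (a + 1))" using adj_idx[OF ps k, of a "a + 1"] aL L by simp
    hence "adj k (qs ! c0) (qs ! c1)" using c0 c1 by simp
    hence "c1 = Suc c0 \<or> c0 = Suc c1" using adj_idx[OF qs k c0(1) c1(1)] by blast
    thus ?thesis
    proof
      assume h: "c1 = Suc c0"
      have "\<forall>r\<le>L. c0 + r < length qs \<and> qs ! (c0 + r) = ps ! (a + r)"
        by (rule propagate[OF ps qs k aL sub L]) (use h c0 c1 in auto)
      thus ?thesis using qs by blast
    next
      assume h: "c0 = Suc c1"
      define c where "c = length qs - 1 - c0"
      have r: "plist k (rev qs)" using plist_rev[OF qs] .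
      have e1: "c + 1 < length (rev qs)" using h c0 c1 by (simp add: c_def)
      have e2: "rev qs ! c = ps ! a" using c0 by (simp add: c_def rev_nth)
      have "length qs - Suc (c + 1) = c1" using h c0 by (simp add: c_def)
      hence e3: "rev qs ! (c + 1) = ps ! (a + 1)" using c1 e1 by (simp add: rev_nth)
      have sub2: "\<forall>r\<le>L. ps ! (a + r) \<in> set (rev qs)" using sub by simp
      have "\<forall>r\<le>L. c + r < length (rev qs) \<and> rev qs ! (c + r) = ps ! (a + r)"
        by (rule propagate[OF ps r k aL sub2 L e1 e2 e3])
      thus ?thesis using r by (intro exI[of _ "rev qs"] exI[of _ c]) simp
    qed
  qed
qed

lemma cost_formula:
  fixes i0 iv j :: nat
  shows "nd i0 j + nd j iv = (if j < min i0 iv then (max i0 iv - min i0 iv) + 2 * (min i0 iv - j)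
     else if j \<le> max i0 iv then max i0 iv - min i0 iv else (max i0 iv - min i0 iv) + 2 * (j - max i0 iv))"
  unfolding nd_def min_def max_def by auto

lemma half_le:
  fixes x e s :: nat
  assumes "2 * s \<le> e" "e < 2 * s + 2"
  shows "2 * x \<le> e \<longleftrightarrow> x \<le> s"
  using assms by presburger

lemma Jchar:
  fixes i0 iv j t s a b len :: nat
  assumes "nd i0 iv \<le> t" "2 * s \<le> t - nd i0 iv" "t - nd i0 iv < 2 * s + 2"
    and "a = min i0 iv - s" "b = min (len - 1) (max i0 iv + s)" "j < len" "i0 < len" "iv < len"
  shows "nd i0 j + nd j iv \<le> t \<longleftrightarrow> a \<le> j \<and> j \<le> b"
proof -
  define lo where "lo = min i0 iv"
  define hi where "hi = max i0 iv"
  have D: "nd i0 iv = hi - lo" "lo \<le> hi" "hi < len" unfolding nd_def lo_def hi_def using assms(7,8) by auto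
  have c: "nd i0 j + nd j iv = (if j < lo then (hi - lo) + 2 * (lo - j)
     else if j \<le> hi then hi - lo else (hi - lo) + 2 * (j - hi))"
    unfolding lo_def hi_def by (rule cost_formula)
  have a: "a = lo - s" and b: "b = min (len - 1) (hi + s)" using assms(4,5) lo_def hi_def by auto
  have bl: "b < len" using b D by simp
  have hb: "hi \<le> b" using b D assms(6) by simp
  have bb: "j \<le> b \<longleftrightarrow> j \<le> hi + s" using b assms(6) by auto
  show ?thesis
  proof (cases "j < lo")
    case True
    have e1: "hi - lo + 2 * (lo - j) \<le> t \<longleftrightarrow> 2 * (lo - j) \<le> t - nd i0 iv" using D(1) assms(1) by linarith
    have e2: "lo - s \<le> j \<longleftrightarrow> lo - j \<le> s" by linarith
    have "hi - lo + 2 * (lo - j) \<le> t \<longleftrightarrow> lo - s \<le> j" unfolding e1 e2 by (rule half_le[OF assms(2,3)])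
    thus ?thesis using True c a hb D(2) by simp
  next
    case False
    show ?thesis
    proof (cases "j \<le> hi")
      case True
      have "lo - s \<le> j" using False by simp
      thus ?thesis using True False c a hb D assms(1) by simp
    next
      case F2: False
      have e1: "hi - lo + 2 * (j - hi) \<le> t \<longleftrightarrow> 2 * (j - hi) \<le> t - nd i0 iv" using D(1) assms(1) by linarith
      have e2: "j \<le> hi + s \<longleftrightarrow> j - hi \<le> s" by linarith
      have "hi - lo + 2 * (j - hi) \<le> t \<longleftrightarrow> j \<le> hi + s" unfolding e1 e2 by (rule half_le[OF assms(2,3)])
      moreover have "lo - s \<le> j" using False by simp
      ultimately show ?thesis using F2 False c a bb by simp
    qed
  qed
qed

lemma arith2:
  fixes a c m j t r0 rv L :: nat
  assumes "nd (c + r0) m + nd m (c + rv) \<le> t" "c + L < m" "r0 \<le> L" "rv \<le> L"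
    "t < nd (a + r0) j + nd j (a + rv)" "j = Suc (a + L) \<or> a + L = Suc j" "\<not> (a \<le> j \<and> j \<le> a + L)"
  shows False
proof -
  have m1: "nd (c + r0) m = m - (c + r0)" "nd m (c + rv) = m - (c + rv)" using assms(2-4) by (auto simp: nd_def)
  from assms(6) show False
  proof
    assume j: "j = Suc (a + L)"
    have "nd (a + r0) j = j - (a + r0)" "nd j (a + rv) = j - (a + rv)" using j assms(3,4) by (auto simp: nd_def)
    thus False using m1 assms(1-5) j by linarith
  next
    assume j: "a + L = Suc j"
    hence L: "L = 0" using assms(7) by linarith
    hence r: "r0 = 0" "rv = 0" using assms(3,4) by auto
    have "nd (a + r0) j = 1" "nd j (a + rv) = 1" using j r L by (auto simp: nd_def)
    thus False using m1 assms(1,2,5) r L by linarith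
  qed
qed

lemma arith3:
  fixes a c m j t r0 rv L :: nat
  assumes "nd (c + r0) m + nd m (c + rv) \<le> t" "m < c" "r0 \<le> L" "rv \<le> L"
    "t < nd (a + r0) j + nd j (a + rv)" "j = Suc a \<or> a = Suc j" "\<not> (a \<le> j \<and> j \<le> a + L)"
  shows False
proof -
  have m1: "nd (c + r0) m = c + r0 - m" "nd m (c + rv) = c + rv - m" using assms(2) by (auto simp: nd_def)
  from assms(6) show False
  proof
    assume j: "j = Suc a"
    hence L: "L = 0" using assms(7) by linarith
    hence r: "r0 = 0" "rv = 0" using assms(3,4) by auto
    have "nd (a + r0) j = 1" "nd j (a + rv) = 1" using j r L by (auto simp: nd_def)
    thus False using m1 assms(1,2,5) r L by linarith
  next
    assume j: "a = Suc j"
    have "nd (a + r0) j = a + r0 - j" "nd j (a + rv) = a + rv - j" using j by (auto simp: nd_def)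
    thus False using m1 assms(1,2,5) j by linarith
  qed
qed

lemma key:
  assumes ps: "plist k ps" and qs: "plist k qs" and k: "k > 0"
    and z0: "z0 \<in> set ps" and v: "v \<in> set ps" and dt: "dC k (set ps) z0 v \<le> t"
    and ce: "M \<subseteq> set qs" "\<forall>w\<in>M. bc k (set ps) w = bc k (set qs) w"
    and Mdef: "M = {v' \<in> set ps. dC k (set ps) z0 v' + dC k (set ps) v' v \<le> t}"
  shows "{v' \<in> set qs. dC k (set qs) z0 v' + dC k (set qs) v' v \<le> t} = M"
proof -
  obtain i0 where i0: "i0 < length ps" "ps ! i0 = z0" using z0 by (metis in_set_conv_nth)
  obtain iv where iv: "iv < length ps" "ps ! iv = v" using v by (metis in_set_conv_nth)
  have dps: "distinct ps" using ps unfolding plist_def by blast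
  have dqs: "distinct qs" using qs unfolding plist_def by blast
  define cost where "cost j = nd i0 j + nd j iv" for j
  have D: "nd i0 iv \<le> t" using dt dist_idx[OF ps k i0(1) iv(1)] i0 iv by simp
  have Mps: "w \<in> M \<longleftrightarrow> (\<exists>j<length ps. w = ps ! j \<and> cost j \<le> t)" for w
  proof
    assume "w \<in> M"
    then obtain j where j: "j < length ps" "w = ps ! j" "dC k (set ps) z0 w + dC k (set ps) w v \<le> t"
      unfolding Mdef by (auto simp: in_set_conv_nth)
    thus "\<exists>j<length ps. w = ps ! j \<and> cost j \<le> t"
      using dist_idx[OF ps k i0(1) j(1)] dist_idx[OF ps k j(1) iv(1)] i0 iv by (auto simp: cost_def)
  next
    assume "\<exists>j<length ps. w = ps ! j \<and> cost j \<le> t"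
    then obtain j where j: "j < length ps" "w = ps ! j" "cost j \<le> t" by blast
    thus "w \<in> M"
      using dist_idx[OF ps k i0(1) j(1)] dist_idx[OF ps k j(1) iv(1)] i0 iv unfolding Mdef
      by (auto simp: cost_def)
  qed
  define s where "s = (t - nd i0 iv) div 2"
  have s1: "2 * s \<le> t - nd i0 iv" "t - nd i0 iv < 2 * s + 2" unfolding s_def by auto
  define a where "a = min i0 iv - s"
  define b where "b = min (length ps - 1) (max i0 iv + s)"
  have J: "j < length ps \<Longrightarrow> cost j \<le> t \<longleftrightarrow> a \<le> j \<and> j \<le> b" for j
    unfolding cost_def by (rule Jchar[OF D s1 a_def b_def _ i0(1) iv(1)])
  have ab: "a \<le> i0" "i0 \<le> b" "a \<le> iv" "iv \<le> b" "b < length ps"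
    using i0(1) iv(1) by (auto simp: a_def b_def)
  define L where "L = b - a"
  define r0 where "r0 = i0 - a"
  define rv where "rv = iv - a"
  have aL: "a + L < length ps" using ab by (simp add: L_def)
  have Mps2: "w \<in> M \<longleftrightarrow> (\<exists>r\<le>L. w = ps ! (a + r))" for w
  proof
    assume "w \<in> M"
    then obtain j where "j < length ps" "w = ps ! j" "cost j \<le> t" using Mps by blast
    thus "\<exists>r\<le>L. w = ps ! (a + r)" using J[of j] by (intro exI[of _ "j - a"]) (auto simp: L_def)
  next
    assume "\<exists>r\<le>L. w = ps ! (a + r)"
    then obtain r where r: "r \<le> L" "w = ps ! (a + r)" by blast
    have "a + r < length ps" "cost (a + r) \<le> t" using J[of "a + r"] r ab by (auto simp: L_def)
    thus "w \<in> M" using Mps r by blast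
  qed
  have sub: "\<forall>r\<le>L. ps ! (a + r) \<in> set qs" using Mps2 ce(1) by blast
  have nag: "u \<in> set ps" if w: "w \<in> M" and adj: "adj k w u" and u: "u \<in> set qs" for w u
  proof -
    obtain i where i: "i < 2 * k" "u = vadd w (eps k i)" using adj unfolding adj_def by blast
    have "bc k (set ps) w ! i = bc k (set qs) w ! i" using ce(2) w by simp
    thus ?thesis using i u by (simp add: bc_def)
  qed
  obtain Q c where Q: "plist k Q" "set Q = set qs" "\<forall>r\<le>L. c + r < length Q \<and> Q ! (c + r) = ps ! (a + r)"
    using orient[OF ps qs k aL sub] by blast
  have dQ: "distinct Q" using Q(1) unfolding plist_def by blast
  have r0L: "r0 \<le> L" "rv \<le> L" "i0 = a + r0" "iv = a + rv" using ab by (auto simp: L_def r0_def rv_def)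
  have zQ: "z0 = Q ! (c + r0)" using Q(3) r0L i0 by metis
  have vQ: "v = Q ! (c + rv)" using Q(3) r0L iv by metis
  have cr0: "c + r0 < length Q" "c + rv < length Q" using Q(3) r0L by auto
  have notM: "Q ! m \<notin> M" if m: "m < length Q" "m < c \<or> c + L < m" for m
  proof
    assume "Q ! m \<in> M"
    then obtain r where r: "r \<le> L" "Q ! m = ps ! (a + r)" using Mps2 by blast
    hence "Q ! m = Q ! (c + r)" using Q(3) by metis
    hence "m = c + r" using nth_eq_iff_index_eq[OF dQ m(1)] Q(3) r(1) by metis
    thus False using m(2) r(1) by linarith
  qed
  show ?thesis
  proof (rule set_eqI, rule iffI)
    fix w assume "w \<in> M"
    then obtain r where r: "r \<le> L" "w = ps ! (a + r)" using Mps2 by blast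
    have wQ: "w = Q ! (c + r)" "c + r < length Q" using Q(3) r by auto
    have "cost (a + r) \<le> t" using Mps \<open>w \<in> M\<close> r J[of "a + r"] ab by (auto simp: L_def)
    moreover have "dC k (set qs) z0 w + dC k (set qs) w v = cost (a + r)"
      using dist_idx[OF Q(1) k cr0(1) wQ(2)] dist_idx[OF Q(1) k wQ(2) cr0(2)] zQ vQ wQ(1) Q(2) r0L
      by (simp add: cost_def nd_def)
    ultimately show "w \<in> {v' \<in> set qs. dC k (set qs) z0 v' + dC k (set qs) v' v \<le> t}"
      using wQ Q(2) by (metis (mono_tags, lifting) mem_Collect_eq nth_mem)
  next
    fix w assume "w \<in> {v' \<in> set qs. dC k (set qs) z0 v' + dC k (set qs) v' v \<le> t}"
    hence w: "w \<in> set Q" "dC k (set Q) z0 w + dC k (set Q) w v \<le> t" using Q(2) by auto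
    then obtain m where m: "m < length Q" "w = Q ! m" by (metis in_set_conv_nth)
    have cm: "nd (c + r0) m + nd m (c + rv) \<le> t"
      using w(2) dist_idx[OF Q(1) k cr0(1) m(1)] dist_idx[OF Q(1) k m(1) cr0(2)] zQ vQ m(2) by simp
    consider "c \<le> m \<and> m \<le> c + L" | "c + L < m" | "m < c" by linarith
    thus "w \<in> M"
    proof cases
      case 1
      have r: "m - c \<le> L" using 1 by linarith
      have "Q ! (c + (m - c)) = ps ! (a + (m - c))" using Q(3) r by blast
      hence "w = ps ! (a + (m - c))" using m(2) 1 by simp
      thus ?thesis using Mps2 r by blast
    next
      case 2
      define y where "y = Q ! (c + L + 1)"
      have yl: "c + L + 1 < length Q" using 2 m(1) by linarith
      have bQ: "Q ! (c + L) = ps ! b" "c + L < length Q" using Q(3) ab by (auto simp: L_def)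
      have "adj k (Q ! (c + L)) y" unfolding y_def using adj_idx[OF Q(1) k bQ(2) yl] by simp
      moreover have "ps ! b \<in> M" using Mps2[of "ps ! b"] ab by (auto simp: L_def intro!: exI[of _ "b - a"])
      ultimately have "y \<in> set ps" using nag bQ Q(2) yl unfolding y_def by (metis nth_mem)
      then obtain j where j: "j < length ps" "y = ps ! j" by (metis in_set_conv_nth)
      have "adj k (ps ! b) (ps ! j)" using \<open>adj k (Q ! (c + L)) y\<close> bQ j by simp
      hence jb: "j = Suc b \<or> b = Suc j" using adj_idx[OF ps k ab(5) j(1)] by blast
      have "y \<notin> M" unfolding y_def by (rule notM) (use yl in auto)
      have nab: "\<not> (a \<le> j \<and> j \<le> b)"
      proof
        assume h: "a \<le> j \<and> j \<le> b"
        hence "j - a \<le> L" "a + (j - a) = j" unfolding L_def by auto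
        hence "y \<in> M" using Mps2 j(2) by metis
        thus False using \<open>y \<notin> M\<close> by blast
      qed
      hence "t < cost j" using J[OF j(1)] by linarith
      hence tc: "t < nd (a + r0) j + nd j (a + rv)" using r0L by (simp add: cost_def)
      have bL: "b = a + L" using ab by (simp add: L_def)
      have False by (rule arith2[OF cm 2 r0L(1,2) tc]) (use jb bL nab in auto)
      thus ?thesis ..
    next
      case 3
      define y where "y = Q ! (c - 1)"
      have aQ: "Q ! c = ps ! a" "c < length Q" using Q(3) by (metis add_0_right le0)+
      have yl: "c - 1 < length Q" "Suc (c - 1) = c" using 3 aQ(2) by auto
      have "adj k (Q ! c) y" unfolding y_def using adj_idx[OF Q(1) k aQ(2) yl(1)] yl(2) by simp
      moreover have "ps ! a \<in> M" using Mps2[of "ps ! a"] by auto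
      ultimately have "y \<in> set ps" using nag aQ Q(2) yl unfolding y_def by (metis nth_mem)
      then obtain j where j: "j < length ps" "y = ps ! j" by (metis in_set_conv_nth)
      have "a < length ps" using ab by simp
      have "adj k (ps ! a) (ps ! j)" using \<open>adj k (Q ! c) y\<close> aQ j by simp
      hence ja: "j = Suc a \<or> a = Suc j" using adj_idx[OF ps k \<open>a < length ps\<close> j(1)] by blast
      have "y \<notin> M" unfolding y_def by (rule notM) (use yl 3 in auto)
      have nab: "\<not> (a \<le> j \<and> j \<le> b)"
      proof
        assume h: "a \<le> j \<and> j \<le> b"
        hence "j - a \<le> L" "a + (j - a) = j" unfolding L_def by auto
        hence "y \<in> M" using Mps2 j(2) by metis
        thus False using \<open>y \<notin> M\<close> by blast
      qed
      hence "t < cost j" using J[OF j(1)] by linarith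
      hence tc: "t < nd (a + r0) j + nd j (a + rv)" using r0L by (simp add: cost_def)
      have bL: "b = a + L" using ab by (simp add: L_def)
      have False by (rule arith3[OF cm 3 r0L(1,2) tc]) (use ja bL nab in auto)
      thus ?thesis ..
    qed
  qed
qed

theorem theorem3:
  fixes k t :: nat and C C' :: "int list set" and v :: "int list"
  assumes "k \<in> {2, 3}"
    and "gconfig k C" and "gconfig k C'"
    and "v \<in> C"
    and "dC k C (origin k) v \<le> t"
  shows "equiv' k t v C C' \<longleftrightarrow> consistent_ext k (Mset k v t C) C C'"
proof
  have aiC: "ai k v t C = AI t v {(v', bc k C v') | v'. v' \<in> C \<and> dC k C (origin k) v' + dC k C v' v \<le> t}"
    using assms(5) by (simp add: ai_def)
  {
    assume e: "equiv' k t v C C'"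
    hence e1: "ai k v t C' = ai k v t C" "ai k v t C' \<noteq> Q" unfolding equiv'_def by auto
    hence "\<not> dC k C' (origin k) v > t" unfolding ai_def by (auto split: if_splits)
    hence S: "{(v', bc k C' v') | v'. v' \<in> C' \<and> dC k C' (origin k) v' + dC k C' v' v \<le> t}
        = {(v', bc k C v') | v'. v' \<in> C \<and> dC k C (origin k) v' + dC k C v' v \<le> t}"
      using e1(1) aiC by (simp add: ai_def)
    show "consistent_ext k (Mset k v t C) C C'"
      unfolding consistent_ext_def
    proof (intro conjI ballI subsetI)
      fix w assume w: "w \<in> Mset k v t C"
      hence "(w, bc k C w) \<in> {(v', bc k C v') | v'. v' \<in> C \<and> dC k C (origin k) v' + dC k C v' v \<le> t}"
        unfolding Mset_def by blast
      hence "(w, bc k C w) \<in> {(v', bc k C' v') | v'. v' \<in> C' \<and> dC k C' (origin k) v' + dC k C' v' v \<le> t}"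
        using S by simp
      hence "w \<in> C' \<and> bc k C w = bc k C' w" by auto
      thus "w \<in> C'" "bc k C w = bc k C' w" by auto
    qed
  }
  assume ce: "consistent_ext k (Mset k v t C) C C'"
  have k: "k > 0" using assms(1) by auto
  obtain ps where ps: "plist k ps" "origin k \<in> set ps" "C = set ps" using gconfig_plist[OF assms(2)] by blast
  obtain qs where qs: "plist k qs" "origin k \<in> set qs" "C' = set qs" using gconfig_plist[OF assms(3)] by blast
  have ce1: "Mset k v t C \<subseteq> C'" "\<forall>w\<in>Mset k v t C. bc k C w = bc k C' w"
    using ce unfolding consistent_ext_def by auto
  have KEY: "{v' \<in> C'. dC k C' (origin k) v' + dC k C' v' v \<le> t} = Mset k v t C"
    using key[OF ps(1) qs(1) k ps(2) assms(4)[unfolded ps(3)] assms(5)[unfolded ps(3)],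
        of "Mset k v t C"] ce1 ps(3) qs(3) unfolding Mset_def by simp
  obtain iv where iv: "iv < length ps" "ps ! iv = v" using assms(4) ps(3) by (metis in_set_conv_nth)
  have "dC k C v v = 0" using dist_idx[OF ps(1) k iv(1) iv(1)] iv ps(3) by (simp add: nd_def)
  hence vM: "v \<in> Mset k v t C" using assms(4,5) unfolding Mset_def by simp
  hence vC': "v \<in> C'" using ce1 by blast
  have "dC k C' (origin k) v \<le> t" using vM KEY[symmetric] by auto
  hence aiC': "ai k v t C' = AI t v {(v', bc k C' v') | v'. v' \<in> C' \<and> dC k C' (origin k) v' + dC k C' v' v \<le> t}"
    by (simp add: ai_def)
  have MM: "(w \<in> C' \<and> dC k C' (origin k) w + dC k C' w v \<le> t) \<longleftrightarrow> w \<in> Mset k v t C" for w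
    using KEY by blast
  have MC: "w \<in> Mset k v t C \<longleftrightarrow> (w \<in> C \<and> dC k C (origin k) w + dC k C w v \<le> t)" for w
    unfolding Mset_def by blast
  have "{(v', bc k C' v') | v'. v' \<in> C' \<and> dC k C' (origin k) v' + dC k C' v' v \<le> t}
      = {(v', bc k C v') | v'. v' \<in> C \<and> dC k C (origin k) v' + dC k C v' v \<le> t}"
  proof (rule set_eqI, rule iffI)
    fix x assume "x \<in> {(v', bc k C' v') | v'. v' \<in> C' \<and> dC k C' (origin k) v' + dC k C' v' v \<le> t}"
    then obtain w where w: "x = (w, bc k C' w)" "w \<in> Mset k v t C" using MM by blast
    thus "x \<in> {(v', bc k C v') | v'. v' \<in> C \<and> dC k C (origin k) v' + dC k C v' v \<le> t}"
      using ce1(2) MC by auto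
  next
    fix x assume "x \<in> {(v', bc k C v') | v'. v' \<in> C \<and> dC k C (origin k) v' + dC k C v' v \<le> t}"
    then obtain w where w: "x = (w, bc k C w)" "w \<in> Mset k v t C" using MC by blast
    thus "x \<in> {(v', bc k C' v') | v'. v' \<in> C' \<and> dC k C' (origin k) v' + dC k C' v' v \<le> t}"
      using ce1(2) MM by auto
  qed
  thus "equiv' k t v C C'" unfolding equiv'_def using aiC aiC' assms(4) vC' by simp
qed

end
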